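(* Let $\mathcal{A},\mathcal{A}'$ be abelian categories with amplitudes $\alpha,\alpha'$, and let $F\colon\mathcal{A}\to\mathcal{A}'$ be an additive functor for which there exists $K\ge0$ such that $\mathrm{d}_{\alpha'}(F(A),F(B))\le K\,\mathrm{d}_\alpha(A,B)$ for all $A,B\in\operatorname{ob}\mathcal{A}$. Then $\alpha'(F(A))\le K\alpha(A)$ for all $A\in\operatorname{ob}\mathcal{A}$.
   Context: An amplitude on an abelian category $\mathcal{A}$ is a function $\alpha\colon\operatorname{ob}\mathcal{A}\to[0,\infty]$ with $\alpha(0)=0$ such that for every short exact sequence $0\to A\to B\to C\to0$, $\alpha(A)\le\alpha(B)$, $\alpha(C)\le\alpha(B)$ and $\alpha(B)\le\alpha(A)+\alpha(C)$. The path metric $\mathrm{d}_\alpha(A,B)$ is the infimum, over zigzags $A\xleftarrow{\gamma_1}C_1\xrightarrow{\gamma_2}\cdots\xrightarrow{\gamma_n}B$, of $\sum_i\alpha(\ker\gamma_i)+\alpha(\operatorname{coker}\gamma_i)$ ($\inf\emptyset=\infty$). *)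

theory Defs
  imports Complex_Main "HOL-Library.Extended_Nonnegative_Real"
begin

text \<open>A category is given by a set of objects, hom-sets, composition
  (Comp A B C g f = g o f for f : A -> B, g : B -> C), identities, and the
  additive structure on hom-sets: Add A B f g = f + g, Zro A B = zero morphism.\<close>

record ('o, 'm) acat =
  Obj  :: "'o set"
  Hom  :: "'o \<Rightarrow> 'o \<Rightarrow> 'm set"
  Comp :: "'o \<Rightarrow> 'o \<Rightarrow> 'o \<Rightarrow> 'm \<Rightarrow> 'm \<Rightarrow> 'm"
  Idm  :: "'o \<Rightarrow> 'm"
  Add  :: "'o \<Rightarrow> 'o \<Rightarrow> 'm \<Rightarrow> 'm \<Rightarrow> 'm"
  Zro  :: "'o \<Rightarrow> 'o \<Rightarrow> 'm"

definition is_category :: "('o, 'm) acat \<Rightarrow> bool" where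
  "is_category C \<longleftrightarrow>
     (\<forall>A\<in>Obj C. Idm C A \<in> Hom C A A) \<and>
     (\<forall>A\<in>Obj C. \<forall>B\<in>Obj C. \<forall>D\<in>Obj C. \<forall>f\<in>Hom C A B. \<forall>g\<in>Hom C B D.
        Comp C A B D g f \<in> Hom C A D) \<and>
     (\<forall>A\<in>Obj C. \<forall>B\<in>Obj C. \<forall>f\<in>Hom C A B.
        Comp C A B B (Idm C B) f = f \<and> Comp C A A B f (Idm C A) = f) \<and>
     (\<forall>A\<in>Obj C. \<forall>B\<in>Obj C. \<forall>D\<in>Obj C. \<forall>E\<in>Obj C.
        \<forall>f\<in>Hom C A B. \<forall>g\<in>Hom C B D. \<forall>h\<in>Hom C D E.
        Comp C A D E h (Comp C A B D g f) = Comp C A B E (Comp C B D E h g) f)"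

definition is_preadditive :: "('o, 'm) acat \<Rightarrow> bool" where
  "is_preadditive C \<longleftrightarrow>
     (\<forall>A\<in>Obj C. \<forall>B\<in>Obj C.
        Zro C A B \<in> Hom C A B \<and>
        (\<forall>f\<in>Hom C A B. \<forall>g\<in>Hom C A B. Add C A B f g \<in> Hom C A B) \<and>
        (\<forall>f\<in>Hom C A B. \<forall>g\<in>Hom C A B. \<forall>h\<in>Hom C A B.
           Add C A B (Add C A B f g) h = Add C A B f (Add C A B g h)) \<and>
        (\<forall>f\<in>Hom C A B. \<forall>g\<in>Hom C A B. Add C A B f g = Add C A B g f) \<and>
        (\<forall>f\<in>Hom C A B. Add C A B f (Zro C A B) = f) \<and>
        (\<forall>f\<in>Hom C A B. \<exists>g\<in>Hom C A B. Add C A B f g = Zro C A B)) \<and>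
     (\<forall>A\<in>Obj C. \<forall>B\<in>Obj C. \<forall>D\<in>Obj C.
        \<forall>f\<in>Hom C A B. \<forall>f'\<in>Hom C A B. \<forall>g\<in>Hom C B D. \<forall>g'\<in>Hom C B D.
          Comp C A B D g (Add C A B f f') = Add C A D (Comp C A B D g f) (Comp C A B D g f') \<and>
          Comp C A B D (Add C B D g g') f = Add C A D (Comp C A B D g f) (Comp C A B D g' f))"

definition is_zero_obj :: "('o, 'm) acat \<Rightarrow> 'o \<Rightarrow> bool" where
  "is_zero_obj C Z \<longleftrightarrow> Z \<in> Obj C \<and>
     (\<forall>A\<in>Obj C. Hom C Z A = {Zro C Z A} \<and> Hom C A Z = {Zro C A Z})"

definition has_biproducts :: "('o, 'm) acat \<Rightarrow> bool" where
  "has_biproducts C \<longleftrightarrow>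
     (\<forall>A\<in>Obj C. \<forall>B\<in>Obj C. \<exists>P\<in>Obj C.
        \<exists>i1\<in>Hom C A P. \<exists>i2\<in>Hom C B P. \<exists>p1\<in>Hom C P A. \<exists>p2\<in>Hom C P B.
          Comp C A P A p1 i1 = Idm C A \<and> Comp C B P B p2 i2 = Idm C B \<and>
          Comp C B P A p1 i2 = Zro C B A \<and> Comp C A P B p2 i1 = Zro C A B \<and>
          Add C P P (Comp C P A P i1 p1) (Comp C P B P i2 p2) = Idm C P)"

definition is_kernel :: "('o, 'm) acat \<Rightarrow> 'o \<Rightarrow> 'o \<Rightarrow> 'm \<Rightarrow> 'o \<Rightarrow> 'm \<Rightarrow> bool" where
  "is_kernel C A B f K k \<longleftrightarrow> K \<in> Obj C \<and> k \<in> Hom C K A \<and>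
     Comp C K A B f k = Zro C K B \<and>
     (\<forall>X\<in>Obj C. \<forall>g\<in>Hom C X A. Comp C X A B f g = Zro C X B \<longrightarrow>
        (\<exists>!u. u \<in> Hom C X K \<and> Comp C X K A k u = g))"

definition is_cokernel :: "('o, 'm) acat \<Rightarrow> 'o \<Rightarrow> 'o \<Rightarrow> 'm \<Rightarrow> 'o \<Rightarrow> 'm \<Rightarrow> bool" where
  "is_cokernel C A B f Q q \<longleftrightarrow> Q \<in> Obj C \<and> q \<in> Hom C B Q \<and>
     Comp C A B Q q f = Zro C A Q \<and>
     (\<forall>X\<in>Obj C. \<forall>g\<in>Hom C B X. Comp C A B X g f = Zro C A X \<longrightarrow>
        (\<exists>!u. u \<in> Hom C Q X \<and> Comp C B Q X u q = g))"

definition is_mono :: "('o, 'm) acat \<Rightarrow> 'o \<Rightarrow> 'o \<Rightarrow> 'm \<Rightarrow> bool" where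
  "is_mono C A B f \<longleftrightarrow> (\<forall>X\<in>Obj C. \<forall>g\<in>Hom C X A. \<forall>h\<in>Hom C X A.
      Comp C X A B f g = Comp C X A B f h \<longrightarrow> g = h)"

definition is_epi :: "('o, 'm) acat \<Rightarrow> 'o \<Rightarrow> 'o \<Rightarrow> 'm \<Rightarrow> bool" where
  "is_epi C A B f \<longleftrightarrow> (\<forall>X\<in>Obj C. \<forall>g\<in>Hom C B X. \<forall>h\<in>Hom C B X.
      Comp C A B X g f = Comp C A B X h f \<longrightarrow> g = h)"

definition abelian_cat :: "('o, 'm) acat \<Rightarrow> bool" where
  "abelian_cat C \<longleftrightarrow> is_category C \<and> is_preadditive C \<and>
     (\<exists>Z. is_zero_obj C Z) \<and> has_biproducts C \<and>
     (\<forall>A\<in>Obj C. \<forall>B\<in>Obj C. \<forall>f\<in>Hom C A B.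
        (\<exists>K k. is_kernel C A B f K k) \<and> (\<exists>Q q. is_cokernel C A B f Q q)) \<and>
     (\<forall>A\<in>Obj C. \<forall>B\<in>Obj C. \<forall>f\<in>Hom C A B.
        is_mono C A B f \<longrightarrow> (\<exists>D\<in>Obj C. \<exists>g\<in>Hom C B D. is_kernel C B D g A f)) \<and>
     (\<forall>A\<in>Obj C. \<forall>B\<in>Obj C. \<forall>f\<in>Hom C A B.
        is_epi C A B f \<longrightarrow> (\<exists>D\<in>Obj C. \<exists>g\<in>Hom C D A. is_cokernel C D A g B f))"

definition short_exact :: "('o, 'm) acat \<Rightarrow> 'o \<Rightarrow> 'o \<Rightarrow> 'o \<Rightarrow> 'm \<Rightarrow> 'm \<Rightarrow> bool" where
  "short_exact C A B D f g \<longleftrightarrow> A \<in> Obj C \<and> B \<in> Obj C \<and> D \<in> Obj C \<and>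
     f \<in> Hom C A B \<and> g \<in> Hom C B D \<and>
     is_kernel C B D g A f \<and> is_cokernel C A B f D g"

definition amplitude :: "('o, 'm) acat \<Rightarrow> ('o \<Rightarrow> ennreal) \<Rightarrow> bool" where
  "amplitude C \<alpha> \<longleftrightarrow>
     (\<forall>Z. is_zero_obj C Z \<longrightarrow> \<alpha> Z = 0) \<and>
     (\<forall>A B D f g. short_exact C A B D f g \<longrightarrow>
        \<alpha> A \<le> \<alpha> B \<and> \<alpha> D \<le> \<alpha> B \<and> \<alpha> B \<le> \<alpha> A + \<alpha> D)"

text \<open>Chosen kernel / cokernel object of f : A -> B (well defined up to isomorphism;
  amplitudes are isomorphism invariant).\<close>
definition ker_obj :: "('o, 'm) acat \<Rightarrow> 'o \<Rightarrow> 'o \<Rightarrow> 'm \<Rightarrow> 'o" where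
  "ker_obj C A B f = (SOME K. \<exists>k. is_kernel C A B f K k)"

definition coker_obj :: "('o, 'm) acat \<Rightarrow> 'o \<Rightarrow> 'o \<Rightarrow> 'm \<Rightarrow> 'o" where
  "coker_obj C A B f = (SOME Q. \<exists>q. is_cokernel C A B f Q q)"

text \<open>A zigzag from A to B: a list of steps (gamma, d, X), going from the current
  object Y to X, where gamma : Y -> X if d, and gamma : X -> Y otherwise.\<close>
fun zigzag :: "('o, 'm) acat \<Rightarrow> 'o \<Rightarrow> 'o \<Rightarrow> ('m \<times> bool \<times> 'o) list \<Rightarrow> bool" where
  "zigzag C A B [] \<longleftrightarrow> A \<in> Obj C \<and> A = B"
| "zigzag C A B ((g, d, X) # zs) \<longleftrightarrow> A \<in> Obj C \<and> X \<in> Obj C \<and>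
     (if d then g \<in> Hom C A X else g \<in> Hom C X A) \<and> zigzag C X B zs"

fun zz_cost :: "('o, 'm) acat \<Rightarrow> ('o \<Rightarrow> ennreal) \<Rightarrow> 'o \<Rightarrow> ('m \<times> bool \<times> 'o) list \<Rightarrow> ennreal" where
  "zz_cost C \<alpha> A [] = 0"
| "zz_cost C \<alpha> A ((g, d, X) # zs) =
     (if d then \<alpha> (ker_obj C A X g) + \<alpha> (coker_obj C A X g)
      else \<alpha> (ker_obj C X A g) + \<alpha> (coker_obj C X A g)) + zz_cost C \<alpha> X zs"

definition path_metric :: "('o, 'm) acat \<Rightarrow> ('o \<Rightarrow> ennreal) \<Rightarrow> 'o \<Rightarrow> 'o \<Rightarrow> ennreal" where
  "path_metric C \<alpha> A B = (INF zs \<in> {zs. zigzag C A B zs}. zz_cost C \<alpha> A zs)"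

definition additive_functor ::
  "('o, 'm) acat \<Rightarrow> ('p, 'n) acat \<Rightarrow> ('o \<Rightarrow> 'p) \<Rightarrow> ('o \<Rightarrow> 'o \<Rightarrow> 'm \<Rightarrow> 'n) \<Rightarrow> bool" where
  "additive_functor C D Fo Fm \<longleftrightarrow>
     (\<forall>A\<in>Obj C. Fo A \<in> Obj D) \<and>
     (\<forall>A\<in>Obj C. \<forall>B\<in>Obj C. \<forall>f\<in>Hom C A B. Fm A B f \<in> Hom D (Fo A) (Fo B)) \<and>
     (\<forall>A\<in>Obj C. Fm A A (Idm C A) = Idm D (Fo A)) \<and>
     (\<forall>A\<in>Obj C. \<forall>B\<in>Obj C. \<forall>E\<in>Obj C. \<forall>f\<in>Hom C A B. \<forall>g\<in>Hom C B E.
        Fm A E (Comp C A B E g f) = Comp D (Fo A) (Fo B) (Fo E) (Fm B E g) (Fm A B f)) \<and>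
     (\<forall>A\<in>Obj C. \<forall>B\<in>Obj C. \<forall>f\<in>Hom C A B. \<forall>g\<in>Hom C A B.
        Fm A B (Add C A B f g) = Add D (Fo A) (Fo B) (Fm A B f) (Fm A B g))"

end

theory Submission
  imports Defs
begin


definition opc :: "('o,'m) acat \<Rightarrow> ('o,'m) acat" where
 "opc C = (| Obj = Obj C, Hom = (\<lambda>A B. Hom C B A), Comp = (\<lambda>A B D g f. Comp C D B A f g),
    Idm = Idm C, Add = (\<lambda>A B. Add C B A), Zro = (\<lambda>A B. Zro C B A) |)"

lemma opc_simps[simp]: "Obj (opc C) = Obj C" "Hom (opc C) A B = Hom C B A"
  "Comp (opc C) A B D g f = Comp C D B A f g" "Idm (opc C) = Idm C"
  "Add (opc C) A B = Add C B A" "Zro (opc C) A B = Zro C B A"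
  by (simp_all add: opc_def)

lemma op_cat: "is_category C \<Longrightarrow> is_category (opc C)"
  unfolding is_category_def by simp

lemma op_pre: "is_preadditive C \<Longrightarrow> is_preadditive (opc C)"
  unfolding is_preadditive_def by simp metis

lemma op_zero: "is_zero_obj (opc C) Z = is_zero_obj C Z"
  unfolding is_zero_obj_def by auto

lemma op_bip: "has_biproducts C \<Longrightarrow> has_biproducts (opc C)"
  unfolding has_biproducts_def apply simp by metis

lemma op_ker: "is_kernel (opc C) A B f K k = is_cokernel C B A f K k"
  unfolding is_kernel_def is_cokernel_def by simp

lemma op_coker: "is_cokernel (opc C) A B f K k = is_kernel C B A f K k"
  unfolding is_kernel_def is_cokernel_def by simp

lemma op_mono: "is_mono (opc C) A B f = is_epi C B A f"
  unfolding is_mono_def is_epi_def by simp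

lemma op_epi: "is_epi (opc C) A B f = is_mono C B A f"
  unfolding is_mono_def is_epi_def by simp

lemma op_abel: "abelian_cat C \<Longrightarrow> abelian_cat (opc C)"
  unfolding abelian_cat_def op_ker op_coker op_mono op_epi op_zero
  using op_cat op_pre op_bip by simp blast

lemma op_ses: "short_exact (opc C) A B D f g = short_exact C D B A g f"
  unfolding short_exact_def op_ker op_coker by auto

lemma op_ampl: "amplitude C \<alpha> \<Longrightarrow> amplitude (opc C) \<alpha>"
  unfolding amplitude_def op_zero op_ses by (metis add.commute)

lemma op_kerobj: "ker_obj (opc C) A B f = coker_obj C B A f"
  unfolding ker_obj_def coker_obj_def op_ker ..




lemma ex1_eq: "\<exists>!x. P x \<Longrightarrow> P a \<Longrightarrow> P b \<Longrightarrow> a = b" by blast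

lemma ker_basic: "is_kernel C A B f K k \<Longrightarrow> K \<in> Obj C \<and> k \<in> Hom C K A \<and> Comp C K A B f k = Zro C K B"
  unfolding is_kernel_def by (elim conjE) (intro conjI)

lemma ker_univ: assumes "is_kernel C A B f K k" "X \<in> Obj C" "g \<in> Hom C X A" "Comp C X A B f g = Zro C X B"
  shows "\<exists>!u. u \<in> Hom C X K \<and> Comp C X K A k u = g"
proof -
  from assms(1) have "\<forall>X\<in>Obj C. \<forall>g\<in>Hom C X A. Comp C X A B f g = Zro C X B \<longrightarrow> (\<exists>!u. u \<in> Hom C X K \<and> Comp C X K A k u = g)"
    unfolding is_kernel_def by (elim conjE)
  hence "\<forall>g\<in>Hom C X A. Comp C X A B f g = Zro C X B \<longrightarrow> (\<exists>!u. u \<in> Hom C X K \<and> Comp C X K A k u = g)"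
    using assms(2) by (rule bspec)
  hence "Comp C X A B f g = Zro C X B \<longrightarrow> (\<exists>!u. u \<in> Hom C X K \<and> Comp C X K A k u = g)"
    using assms(3) by (rule bspec)
  thus ?thesis using assms(4) by (rule mp)
qed

context fixes C :: "('o,'m) acat" assumes ac: "abelian_cat C" begin

lemma cat: "is_category C" and pre: "is_preadditive C" using ac by (auto simp: abelian_cat_def)

lemma comp_in: "A \<in> Obj C \<Longrightarrow> B \<in> Obj C \<Longrightarrow> D \<in> Obj C \<Longrightarrow> f \<in> Hom C A B \<Longrightarrow> g \<in> Hom C B D
  \<Longrightarrow> Comp C A B D g f \<in> Hom C A D" using cat unfolding is_category_def by simp
lemma id_in: "A \<in> Obj C \<Longrightarrow> Idm C A \<in> Hom C A A" using cat unfolding is_category_def by simp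
lemma id_l: "A \<in> Obj C \<Longrightarrow> B \<in> Obj C \<Longrightarrow> f \<in> Hom C A B \<Longrightarrow> Comp C A B B (Idm C B) f = f"
  using cat unfolding is_category_def by simp
lemma id_r: "A \<in> Obj C \<Longrightarrow> B \<in> Obj C \<Longrightarrow> f \<in> Hom C A B \<Longrightarrow> Comp C A A B f (Idm C A) = f"
  using cat unfolding is_category_def by simp
lemma assoc: "A \<in> Obj C \<Longrightarrow> B \<in> Obj C \<Longrightarrow> D \<in> Obj C \<Longrightarrow> E \<in> Obj C \<Longrightarrow>
  f \<in> Hom C A B \<Longrightarrow> g \<in> Hom C B D \<Longrightarrow> h \<in> Hom C D E \<Longrightarrow>
  Comp C A D E h (Comp C A B D g f) = Comp C A B E (Comp C B D E h g) f"
  using cat unfolding is_category_def by simp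
lemma zro_in: "A \<in> Obj C \<Longrightarrow> B \<in> Obj C \<Longrightarrow> Zro C A B \<in> Hom C A B"
  using pre unfolding is_preadditive_def by simp
lemma add_in: "A \<in> Obj C \<Longrightarrow> B \<in> Obj C \<Longrightarrow> f \<in> Hom C A B \<Longrightarrow> g \<in> Hom C A B \<Longrightarrow> Add C A B f g \<in> Hom C A B"
  using pre unfolding is_preadditive_def by simp
lemma add_assoc0: "\<forall>A\<in>Obj C. \<forall>B\<in>Obj C. \<forall>f\<in>Hom C A B. \<forall>g\<in>Hom C A B. \<forall>h\<in>Hom C A B.
   Add C A B (Add C A B f g) h = Add C A B f (Add C A B g h)"
  using pre unfolding is_preadditive_def by blast
lemma add_assoc: "A \<in> Obj C \<Longrightarrow> B \<in> Obj C \<Longrightarrow> f \<in> Hom C A B \<Longrightarrow> g \<in> Hom C A B \<Longrightarrow> h \<in> Hom C A B \<Longrightarrow>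
   Add C A B (Add C A B f g) h = Add C A B f (Add C A B g h)"
  using add_assoc0 by blast
lemma add_comm: "A \<in> Obj C \<Longrightarrow> B \<in> Obj C \<Longrightarrow> f \<in> Hom C A B \<Longrightarrow> g \<in> Hom C A B \<Longrightarrow> Add C A B f g = Add C A B g f"
  using pre unfolding is_preadditive_def by simp
lemma add_zero: "A \<in> Obj C \<Longrightarrow> B \<in> Obj C \<Longrightarrow> f \<in> Hom C A B \<Longrightarrow> Add C A B f (Zro C A B) = f"
  using pre unfolding is_preadditive_def by simp
lemma add_inv0: "\<forall>A\<in>Obj C. \<forall>B\<in>Obj C. \<forall>f\<in>Hom C A B. \<exists>g\<in>Hom C A B. Add C A B f g = Zro C A B"
  using pre unfolding is_preadditive_def by blast
lemma add_inv: "A \<in> Obj C \<Longrightarrow> B \<in> Obj C \<Longrightarrow> f \<in> Hom C A B \<Longrightarrow> \<exists>g\<in>Hom C A B. Add C A B f g = Zro C A B"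
  using add_inv0 by blast
lemma comp_add_r: "A \<in> Obj C \<Longrightarrow> B \<in> Obj C \<Longrightarrow> D \<in> Obj C \<Longrightarrow> f \<in> Hom C A B \<Longrightarrow> f' \<in> Hom C A B \<Longrightarrow> g \<in> Hom C B D \<Longrightarrow>
   Comp C A B D g (Add C A B f f') = Add C A D (Comp C A B D g f) (Comp C A B D g f')"
  using pre unfolding is_preadditive_def by simp
lemma comp_add_l: "A \<in> Obj C \<Longrightarrow> B \<in> Obj C \<Longrightarrow> D \<in> Obj C \<Longrightarrow> f \<in> Hom C A B \<Longrightarrow> g \<in> Hom C B D \<Longrightarrow> g' \<in> Hom C B D \<Longrightarrow>
   Comp C A B D (Add C B D g g') f = Add C A D (Comp C A B D g f) (Comp C A B D g' f)"
  using pre unfolding is_preadditive_def by simp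

lemma idem_zero: assumes "A \<in> Obj C" "B \<in> Obj C" "x \<in> Hom C A B" "Add C A B x x = x"
  shows "x = Zro C A B"
proof -
  obtain n where n: "n \<in> Hom C A B" "Add C A B x n = Zro C A B" using add_inv assms by blast
  have "Zro C A B = Add C A B (Add C A B x x) n" using assms n by simp
  also have "\<dots> = Add C A B x (Add C A B x n)" using add_assoc[OF assms(1,2,3,3) n(1)] .
  also have "\<dots> = x" using n add_zero assms by simp
  finally show ?thesis by simp
qed

lemma comp_zero_r: assumes "A \<in> Obj C" "B \<in> Obj C" "D \<in> Obj C" "g \<in> Hom C B D"
  shows "Comp C A B D g (Zro C A B) = Zro C A D"
proof (rule idem_zero)
  have z: "Zro C A B \<in> Hom C A B" using zro_in assms by simp
  show "Comp C A B D g (Zro C A B) \<in> Hom C A D" using comp_in[OF _ _ _ z] assms by simp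
  have "Add C A B (Zro C A B) (Zro C A B) = Zro C A B" using add_zero[OF _ _ z] assms by simp
  then show "Add C A D (Comp C A B D g (Zro C A B)) (Comp C A B D g (Zro C A B)) = Comp C A B D g (Zro C A B)"
    using comp_add_r[OF _ _ _ z z] assms by metis
qed (use assms in auto)

lemma comp_zero_l: assumes "A \<in> Obj C" "B \<in> Obj C" "D \<in> Obj C" "f \<in> Hom C A B"
  shows "Comp C A B D (Zro C B D) f = Zro C A D"
proof (rule idem_zero)
  have z: "Zro C B D \<in> Hom C B D" using zro_in assms by simp
  show "Comp C A B D (Zro C B D) f \<in> Hom C A D" using comp_in[OF _ _ _ _ z] assms by simp
  have "Add C B D (Zro C B D) (Zro C B D) = Zro C B D" using add_zero[OF _ _ z] assms by simp
  then show "Add C A D (Comp C A B D (Zro C B D) f) (Comp C A B D (Zro C B D) f) = Comp C A B D (Zro C B D) f"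
    using comp_add_l[OF _ _ _ _ z z] assms by metis
qed (use assms in auto)

lemma ker_ex: "A \<in> Obj C \<Longrightarrow> B \<in> Obj C \<Longrightarrow> f \<in> Hom C A B \<Longrightarrow> \<exists>K k. is_kernel C A B f K k"
  using ac unfolding abelian_cat_def by simp
lemma coker_ex: "A \<in> Obj C \<Longrightarrow> B \<in> Obj C \<Longrightarrow> f \<in> Hom C A B \<Longrightarrow> \<exists>K k. is_cokernel C A B f K k"
  using ac unfolding abelian_cat_def by simp
lemma mono_ker: "A \<in> Obj C \<Longrightarrow> B \<in> Obj C \<Longrightarrow> f \<in> Hom C A B \<Longrightarrow> is_mono C A B f \<Longrightarrow>
   \<exists>D\<in>Obj C. \<exists>g\<in>Hom C B D. is_kernel C B D g A f"
  using ac unfolding abelian_cat_def by simp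
lemma epi_coker: "A \<in> Obj C \<Longrightarrow> B \<in> Obj C \<Longrightarrow> f \<in> Hom C A B \<Longrightarrow> is_epi C A B f \<Longrightarrow>
   \<exists>D\<in>Obj C. \<exists>g\<in>Hom C D A. is_cokernel C D A g B f"
  using ac unfolding abelian_cat_def by simp

lemma kernel_mono: assumes "A \<in> Obj C" "B \<in> Obj C" "f \<in> Hom C A B" "is_kernel C A B f K k"
  shows "is_mono C K A k"
  unfolding is_mono_def
proof (intro ballI impI)
  fix X g h assume X: "X \<in> Obj C" and g: "g \<in> Hom C X K" and h: "h \<in> Hom C X K"
    and e: "Comp C X K A k g = Comp C X K A k h"
  have K: "K \<in> Obj C" "k \<in> Hom C K A" "Comp C K A B f k = Zro C K B" using ker_basic[OF assms(4)] by auto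
  have "Comp C X A B f (Comp C X K A k g) = Zro C X B"
    using assoc[OF X K(1) assms(1,2) g K(2) assms(3)] comp_zero_l[OF X K(1) assms(2) g] K(3) by simp
  moreover have "Comp C X K A k g \<in> Hom C X A" using comp_in[OF X K(1) assms(1) g K(2)] .
  ultimately have "\<exists>!u. u \<in> Hom C X K \<and> Comp C X K A k u = Comp C X K A k g"
    using ker_univ[OF assms(4) X] by simp
  then show "g = h" using g h e ex1_eq[of "\<lambda>u. u \<in> Hom C X K \<and> Comp C X K A k u = Comp C X K A k g"] by simp
qed

end



lemma coker_basic: "is_cokernel C A B f Q q \<Longrightarrow> Q \<in> Obj C \<and> q \<in> Hom C B Q \<and> Comp C A B Q q f = Zro C A Q"
  using ker_basic[of "opc C" B A f Q q] by (simp add: op_ker)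

lemma coker_univ: assumes "is_cokernel C A B f Q q" "X \<in> Obj C" "g \<in> Hom C B X" "Comp C A B X g f = Zro C A X"
  shows "\<exists>!u. u \<in> Hom C Q X \<and> Comp C B Q X u q = g"
  using ker_univ[of "opc C" B A f Q q X g] assms by (simp add: op_ker)

lemma coker_epi: assumes "abelian_cat C" "A \<in> Obj C" "B \<in> Obj C" "f \<in> Hom C A B" "is_cokernel C A B f Q q"
  shows "is_epi C B Q q"
  using kernel_mono[OF op_abel[OF assms(1)], of B A f Q q] assms by (simp add: op_ker op_mono)

lemma mono_comp: assumes ac: "abelian_cat C" and o: "A \<in> Obj C" "B \<in> Obj C" "D \<in> Obj C"
  and f: "f \<in> Hom C A B" and g: "g \<in> Hom C B D" and m: "is_mono C A B f" "is_mono C B D g"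
  shows "is_mono C A D (Comp C A B D g f)"
  unfolding is_mono_def
proof (intro ballI impI)
  fix X a b assume X: "X \<in> Obj C" and a: "a \<in> Hom C X A" and b: "b \<in> Hom C X A"
    and e: "Comp C X A D (Comp C A B D g f) a = Comp C X A D (Comp C A B D g f) b"
  have "Comp C X B D g (Comp C X A B f a) = Comp C X B D g (Comp C X A B f b)"
    using e assoc[OF ac X o a f g] assoc[OF ac X o b f g] by simp
  hence "Comp C X A B f a = Comp C X A B f b"
    using m(2) X comp_in[OF ac X o(1,2) a f] comp_in[OF ac X o(1,2) b f] unfolding is_mono_def by blast
  thus "a = b" using m(1) X a b unfolding is_mono_def by blast
qed

lemma epi_is_coker_of_ker:
  assumes ac: "abelian_cat C" and o: "X \<in> Obj C" "Q \<in> Obj C" and q: "q \<in> Hom C X Q"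
    and ep: "is_epi C X Q q" and k: "is_kernel C X Q q I i"
  shows "is_cokernel C I X i Q q"
proof -
  have I: "I \<in> Obj C" "i \<in> Hom C I X" "Comp C I X Q q i = Zro C I Q" using ker_basic[OF k] by auto
  obtain D g where D: "D \<in> Obj C" "g \<in> Hom C D X" "is_cokernel C D X g Q q"
    using epi_coker[OF ac o q ep] by blast
  have "Comp C D X Q q g = Zro C D Q" using coker_basic[OF D(3)] by simp
  then obtain v where v: "v \<in> Hom C D I" "Comp C D I X i v = g" using ker_univ[OF k D(1,2)] by blast
  show ?thesis unfolding is_cokernel_def
  proof (intro conjI ballI impI)
    fix W h assume W: "W \<in> Obj C" and h: "h \<in> Hom C X W" and hi: "Comp C I X W h i = Zro C I W"
    have "Comp C D X W h g = Comp C D I W (Comp C I X W h i) v"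
      using v assoc[OF ac D(1) I(1) o(1) W v(1) I(2) h] by simp
    also have "\<dots> = Zro C D W" using hi comp_zero_l[OF ac D(1) I(1) W v(1)] by simp
    finally show "\<exists>!u. u \<in> Hom C Q W \<and> Comp C X Q W u q = h" using coker_univ[OF D(3) W h] by blast
  qed (use I o q in auto)
qed




lemma coker_obj_prop: assumes "abelian_cat C" "Y \<in> Obj C" "X \<in> Obj C" "f \<in> Hom C Y X"
  shows "\<exists>q. is_cokernel C Y X f (coker_obj C Y X f) q"
  unfolding coker_obj_def using coker_ex[OF assms] by (rule someI_ex)

lemma op_cokerobj: "coker_obj (opc C) A B f = ker_obj C B A f"
  unfolding ker_obj_def coker_obj_def op_coker ..

lemma core_coker:
  assumes ac: "abelian_cat C" and am: "amplitude C \<alpha>" and Y: "Y \<in> Obj C" and X: "X \<in> Obj C"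
    and f: "f \<in> Hom C Y X"
  shows "\<alpha> X \<le> \<alpha> Y + \<alpha> (coker_obj C Y X f)"
proof -
  define Q where "Q = coker_obj C Y X f"
  obtain q where cq: "is_cokernel C Y X f Q q" using coker_obj_prop[OF ac Y X f] Q_def by blast
  have Q: "Q \<in> Obj C" "q \<in> Hom C X Q" "Comp C Y X Q q f = Zro C Y Q" using coker_basic[OF cq] by auto
  have qe: "is_epi C X Q q" using coker_epi[OF ac Y X f cq] .
  obtain I i where ki: "is_kernel C X Q q I i" using ker_ex[OF ac X Q(1,2)] by blast
  have I: "I \<in> Obj C" "i \<in> Hom C I X" "Comp C I X Q q i = Zro C I Q" using ker_basic[OF ki] by auto
  have im: "is_mono C I X i" using kernel_mono[OF ac X Q(1,2) ki] .
  have "short_exact C I X Q i q" unfolding short_exact_def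
    using I Q X ki epi_is_coker_of_ker[OF ac X Q(1,2) qe ki] by simp
  hence a1: "\<alpha> X \<le> \<alpha> I + \<alpha> Q" using am unfolding amplitude_def by blast
  obtain u where u: "u \<in> Hom C Y I" "Comp C Y I X i u = f" using ker_univ[OF ki Y f Q(3)] by blast
  have ue: "is_epi C Y I u" unfolding is_epi_def
  proof (intro ballI impI)
    fix W d1 d2 assume W: "W \<in> Obj C" and d1: "d1 \<in> Hom C I W" and d2: "d2 \<in> Hom C I W"
      and e: "Comp C Y I W d1 u = Comp C Y I W d2 u"
    obtain n where n: "n \<in> Hom C I W" "Add C I W d2 n = Zro C I W" using add_inv[OF ac I(1) W d2] by blast
    define d where "d = Add C I W d1 n"
    have d: "d \<in> Hom C I W" using add_in[OF ac I(1) W d1 n(1)] d_def by simp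
    have "Comp C Y I W d u = Add C Y W (Comp C Y I W d1 u) (Comp C Y I W n u)"
      using comp_add_l[OF ac Y I(1) W u(1) d1 n(1)] d_def by simp
    also have "\<dots> = Comp C Y I W (Add C I W d2 n) u"
      using comp_add_l[OF ac Y I(1) W u(1) d2 n(1)] e by simp
    also have "\<dots> = Zro C Y W" using n(2) comp_zero_l[OF ac Y I(1) W u(1)] by simp
    finally have du: "Comp C Y I W d u = Zro C Y W" .
    obtain M m where km: "is_kernel C I W d M m" using ker_ex[OF ac I(1) W d] by blast
    have M: "M \<in> Obj C" "m \<in> Hom C M I" "Comp C M I W d m = Zro C M W" using ker_basic[OF km] by auto
    have mm: "is_mono C M I m" using kernel_mono[OF ac I(1) W d km] .
    obtain v where v: "v \<in> Hom C Y M" "Comp C Y M I m v = u" using ker_univ[OF km Y u(1) du] by blast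
    define im where "im = Comp C M I X i m"
    have imH: "im \<in> Hom C M X" using comp_in[OF ac M(1) I(1) X M(2) I(2)] im_def by simp
    have imm: "is_mono C M X im" using mono_comp[OF ac M(1) I(1) X M(2) I(2) mm im] im_def by simp
    obtain E g where E: "E \<in> Obj C" "g \<in> Hom C X E" "is_kernel C X E g M im"
      using mono_ker[OF ac M(1) X imH imm] by blast
    have gim: "Comp C M X E g im = Zro C M E" using ker_basic[OF E(3)] by simp
    have "f = Comp C Y M X im v"
      using u(2) v(2) assoc[OF ac Y M(1) I(1) X v(1) M(2) I(2)] im_def by simp
    hence "Comp C Y X E g f = Comp C Y M E (Comp C M X E g im) v"
      using assoc[OF ac Y M(1) X E(1) v(1) imH E(2)] by simp
    also have "\<dots> = Zro C Y E" using gim comp_zero_l[OF ac Y M(1) E(1) v(1)] by simp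
    finally have gf: "Comp C Y X E g f = Zro C Y E" .
    obtain t where t: "t \<in> Hom C Q E" "Comp C X Q E t q = g" using coker_univ[OF cq E(1,2) gf] by blast
    have "Comp C I X E g i = Comp C I Q E t (Comp C I X Q q i)"
      using assoc[OF ac I(1) X Q(1) E(1) I(2) Q(2) t(1)] t(2) by simp
    also have "\<dots> = Zro C I E" using I(3) comp_zero_r[OF ac I(1) Q(1) E(1) t(1)] by simp
    finally have gi: "Comp C I X E g i = Zro C I E" .
    obtain w where w: "w \<in> Hom C I M" "Comp C I M X im w = i" using ker_univ[OF E(3) I(1,2) gi] by blast
    have mwH: "Comp C I M I m w \<in> Hom C I I" using comp_in[OF ac I(1) M(1) I(1) w(1) M(2)] .
    have "Comp C I I X i (Comp C I M I m w) = Comp C I I X i (Idm C I)"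
      using assoc[OF ac I(1) M(1) I(1) X w(1) M(2) I(2)] w(2) im_def id_r[OF ac I(1) X I(2)] by simp
    hence mw: "Comp C I M I m w = Idm C I"
      using im I(1) mwH id_in[OF ac I(1)] unfolding is_mono_def by blast
    have "d = Comp C I I W d (Idm C I)" using id_r[OF ac I(1) W d] by simp
    also have "\<dots> = Comp C I M W (Comp C M I W d m) w"
      using mw[symmetric] assoc[OF ac I(1) M(1) I(1) W w(1) M(2) d] by simp
    also have "\<dots> = Zro C I W" using M(3) comp_zero_l[OF ac I(1) M(1) W w(1)] by simp
    finally have d0: "d = Zro C I W" .
    have "d1 = Add C I W d1 (Zro C I W)" using add_zero[OF ac I(1) W d1] by simp
    also have "\<dots> = Add C I W d1 (Add C I W n d2)" using n(2) add_comm[OF ac I(1) W d2 n(1)] by simp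
    also have "\<dots> = Add C I W d (d2)" using add_assoc[OF ac I(1) W d1 n(1) d2] d_def by simp
    also have "\<dots> = Add C I W d2 (Zro C I W)" using d0 add_comm[OF ac I(1) W d2 zro_in[OF ac I(1) W]] by simp
    also have "\<dots> = d2" using add_zero[OF ac I(1) W d2] .
    finally show "d1 = d2" .
  qed
  obtain L l where kl: "is_kernel C Y I u L l" using ker_ex[OF ac Y I(1) u(1)] by blast
  have "short_exact C L Y I l u" unfolding short_exact_def
    using ker_basic[OF kl] u(1) Y I kl epi_is_coker_of_ker[OF ac Y I(1) u(1) ue kl] by simp
  hence a2: "\<alpha> I \<le> \<alpha> Y" using am unfolding amplitude_def by blast
  from a1 a2 show ?thesis unfolding Q_def by (meson add_right_mono order_trans)
qed

lemma core_ker: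
  assumes ac: "abelian_cat C" and am: "amplitude C \<alpha>" and Y: "Y \<in> Obj C" and X: "X \<in> Obj C"
    and f: "f \<in> Hom C Y X"
  shows "\<alpha> Y \<le> \<alpha> X + \<alpha> (ker_obj C Y X f)"
  using core_coker[OF op_abel[OF ac] op_ampl[OF am], of X Y f] X Y f by (simp add: op_cokerobj)




lemma ennreal_aux: assumes "(a::ennreal) \<le> x + k" "x \<le> c + b" shows "a \<le> (k + k') + c + b"
proof -
  have "x + k \<le> (c + b) + (k + k')" using assms(2) by (rule add_mono) simp
  also have "\<dots> = (k + k') + c + b" by (simp add: ac_simps)
  finally have "x + k \<le> (k + k') + c + b" .
  with assms(1) show ?thesis by (rule order_trans)
qed

lemma ennreal_aux2: assumes "(a::ennreal) \<le> x + k" "x \<le> c + b" shows "a \<le> (k' + k) + c + b"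
  using ennreal_aux[OF assms, of k'] by (simp add: add.commute)

lemma zz_lower:
  assumes ac: "abelian_cat C" and am: "amplitude C \<alpha>"
  shows "zigzag C A B zs \<Longrightarrow> \<alpha> A \<le> zz_cost C \<alpha> A zs + \<alpha> B"
proof (induction zs arbitrary: A)
  case Nil
  then show ?case by simp
next
  case (Cons s zs)
  obtain g d X where s: "s = (g, d, X)" by (cases s) auto
  have A: "A \<in> Obj C" and X: "X \<in> Obj C" and z: "zigzag C X B zs"
    and gh: "if d then g \<in> Hom C A X else g \<in> Hom C X A" using Cons.prems s by auto
  have IH: "\<alpha> X \<le> zz_cost C \<alpha> X zs + \<alpha> B" using Cons.IH[OF z] .
  show ?case
  proof (cases d)
    case True
    then have g: "g \<in> Hom C A X" using gh by simp
    have "\<alpha> A \<le> \<alpha> X + \<alpha> (ker_obj C A X g)" using core_ker[OF ac am A X g] .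
    from ennreal_aux[OF this IH] show ?thesis using s True by simp
  next
    case False
    then have g: "g \<in> Hom C X A" using gh by simp
    have "\<alpha> A \<le> \<alpha> X + \<alpha> (coker_obj C X A g)" using core_coker[OF ac am X A g] .
    from ennreal_aux2[OF this IH, of "\<alpha> (ker_obj C X A g)"] show ?thesis using s False by simp
  qed
qed

lemma pm_lower:
  assumes ac: "abelian_cat C" and am: "amplitude C \<alpha>" and Z: "is_zero_obj C Z"
  shows "\<alpha> A \<le> path_metric C \<alpha> A Z"
  unfolding path_metric_def
proof (rule INF_greatest)
  fix zs assume "zs \<in> {zs. zigzag C A Z zs}"
  then have "\<alpha> A \<le> zz_cost C \<alpha> A zs + \<alpha> Z" using zz_lower[OF ac am] by simp
  moreover have "\<alpha> Z = 0" using am Z unfolding amplitude_def by blast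
  ultimately show "\<alpha> A \<le> zz_cost C \<alpha> A zs" by simp
qed

lemma zero_obj_I:
  assumes ac: "abelian_cat C" and P: "P \<in> Obj C" and e: "Idm C P = Zro C P P"
  shows "is_zero_obj C P"
  unfolding is_zero_obj_def
proof (intro conjI ballI P)
  fix X assume X: "X \<in> Obj C"
  show "Hom C P X = {Zro C P X}"
  proof
    show "Hom C P X \<subseteq> {Zro C P X}"
    proof
      fix a assume a: "a \<in> Hom C P X"
      have "a = Comp C P P X a (Idm C P)" using id_r[OF ac P X a] by simp
      also have "\<dots> = Zro C P X" using e comp_zero_r[OF ac P P X a] by simp
      finally show "a \<in> {Zro C P X}" by simp
    qed
    show "{Zro C P X} \<subseteq> Hom C P X" using zro_in[OF ac P X] by simp
  qed
  show "Hom C X P = {Zro C X P}"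
  proof
    show "Hom C X P \<subseteq> {Zro C X P}"
    proof
      fix a assume a: "a \<in> Hom C X P"
      have "a = Comp C X P P (Idm C P) a" using id_l[OF ac X P a] by simp
      also have "\<dots> = Zro C X P" using e comp_zero_l[OF ac X P P a] by simp
      finally show "a \<in> {Zro C X P}" by simp
    qed
    show "{Zro C X P} \<subseteq> Hom C X P" using zro_in[OF ac X P] by simp
  qed
qed

lemma ker_obj_prop: assumes "abelian_cat C" "Y \<in> Obj C" "X \<in> Obj C" "f \<in> Hom C Y X"
  shows "\<exists>k. is_kernel C Y X f (ker_obj C Y X f) k"
  unfolding ker_obj_def using ker_ex[OF assms] by (rule someI_ex)

lemma pm_upper:
  assumes ac: "abelian_cat C" and am: "amplitude C \<alpha>" and Z: "is_zero_obj C Z" and A: "A \<in> Obj C"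
  shows "path_metric C \<alpha> A Z \<le> \<alpha> A"
proof -
  have Zo: "Z \<in> Obj C" using Z unfolding is_zero_obj_def by simp
  have HZ: "\<And>X. X \<in> Obj C \<Longrightarrow> Hom C Z X = {Zro C Z X} \<and> Hom C X Z = {Zro C X Z}"
    using Z unfolding is_zero_obj_def by simp
  define z where "z = Zro C A Z"
  have zH: "z \<in> Hom C A Z" using zro_in[OF ac A Zo] z_def by simp
  define K where "K = ker_obj C A Z z"
  obtain k where kk: "is_kernel C A Z z K k" using ker_obj_prop[OF ac A Zo zH] K_def by blast
  have K: "K \<in> Obj C" "k \<in> Hom C K A" using ker_basic[OF kk] by auto
  have "Comp C A A Z z (Idm C A) = Zro C A Z" using id_r[OF ac A Zo zH] z_def by simp
  then obtain s where s: "s \<in> Hom C A K" "Comp C A K A k s = Idm C A"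
    using ker_univ[OF kk A id_in[OF ac A]] by blast
  have ses1: "short_exact C K A Z k z" unfolding short_exact_def
  proof (intro conjI K A Zo zH kk)
    show "is_cokernel C K A k Z z" unfolding is_cokernel_def
    proof (intro conjI ballI impI Zo zH)
      show "Comp C K A Z z k = Zro C K Z" using comp_zero_l[OF ac K(1) A Zo K(2)] z_def by simp
      fix W h assume W: "W \<in> Obj C" and h: "h \<in> Hom C A W" and hk: "Comp C K A W h k = Zro C K W"
      have "h = Comp C A A W h (Idm C A)" using id_r[OF ac A W h] by simp
      also have "\<dots> = Comp C A K W (Comp C K A W h k) s" using s assoc[OF ac A K(1) A W s(1) K(2) h] by simp
      also have "\<dots> = Zro C A W" using hk comp_zero_l[OF ac A K(1) W s(1)] by simp
      finally have h0: "h = Zro C A W" .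
      have "Comp C A Z W (Zro C Z W) z = h" using comp_zero_l[OF ac A Zo W zH] h0 z_def by simp
      moreover have "Hom C Z W = {Zro C Z W}" using HZ[OF W] by simp
      ultimately show "\<exists>!u. u \<in> Hom C Z W \<and> Comp C A Z W u z = h" by auto
    qed
  qed
  hence aK: "\<alpha> K \<le> \<alpha> A" using am unfolding amplitude_def by blast
  define Q where "Q = coker_obj C A Z z"
  obtain q where cq: "is_cokernel C A Z z Q q" using coker_obj_prop[OF ac A Zo zH] Q_def by blast
  have Q: "Q \<in> Obj C" "q \<in> Hom C Z Q" using coker_basic[OF cq] by auto
  have qe: "is_epi C Z Q q" using coker_epi[OF ac A Zo zH cq] .
  have q0: "q = Zro C Z Q" using Q(2) HZ[OF Q(1)] by simp
  have "Comp C Z Q Q (Idm C Q) q = Comp C Z Q Q (Zro C Q Q) q"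
    using id_l[OF ac Zo Q(1) Q(2)] comp_zero_l[OF ac Zo Q(1) Q(1) Q(2)] q0 by simp
  hence "Idm C Q = Zro C Q Q" using qe Q(1) id_in[OF ac Q(1)] zro_in[OF ac Q(1) Q(1)]
    unfolding is_epi_def by blast
  hence "is_zero_obj C Q" using zero_obj_I[OF ac Q(1)] by simp
  hence aQ: "\<alpha> Q = 0" using am unfolding amplitude_def by blast
  have zz: "zigzag C A Z [(z, True, Z)]" using A Zo zH by simp
  have "path_metric C \<alpha> A Z \<le> zz_cost C \<alpha> A [(z, True, Z)]"
    unfolding path_metric_def using zz by (intro INF_lower) simp
  also have "\<dots> = \<alpha> K + \<alpha> Q" using K_def Q_def by simp
  also have "\<dots> \<le> \<alpha> A" using aK aQ by simp
  finally show ?thesis .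
qed

lemma functor_zero:
  assumes ac: "abelian_cat C" and ad: "abelian_cat D" and F: "additive_functor C D Fo Fm"
    and Z: "is_zero_obj C Z"
  shows "is_zero_obj D (Fo Z)"
proof -
  have Zo: "Z \<in> Obj C" using Z unfolding is_zero_obj_def by simp
  have HZ: "Hom C Z Z = {Zro C Z Z}" using Z unfolding is_zero_obj_def by simp
  have FZ: "Fo Z \<in> Obj D" using F Zo unfolding additive_functor_def by simp
  have zz: "Zro C Z Z \<in> Hom C Z Z" using HZ by simp
  have idz: "Idm C Z = Zro C Z Z" using id_in[OF ac Zo] HZ by simp
  have Fid: "Fm Z Z (Idm C Z) = Idm D (Fo Z)" using F Zo unfolding additive_functor_def by simp
  have Fadd: "Fm Z Z (Add C Z Z (Zro C Z Z) (Zro C Z Z)) = Add D (Fo Z) (Fo Z) (Fm Z Z (Zro C Z Z)) (Fm Z Z (Zro C Z Z))"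
    using F Zo zz unfolding additive_functor_def by simp
  have FH: "Fm Z Z (Zro C Z Z) \<in> Hom D (Fo Z) (Fo Z)" using F Zo zz unfolding additive_functor_def by simp
  have "Add C Z Z (Zro C Z Z) (Zro C Z Z) = Zro C Z Z" using add_zero[OF ac Zo Zo zz] .
  hence "Fm Z Z (Zro C Z Z) = Zro D (Fo Z) (Fo Z)" using idem_zero[OF ad FZ FZ FH] Fadd by simp
  hence "Idm D (Fo Z) = Zro D (Fo Z) (Fo Z)" using Fid idz by simp
  thus ?thesis using zero_obj_I[OF ad FZ] by simp
qed

theorem mainTheorem9:
  fixes C :: "('o, 'm) acat" and D :: "('p, 'n) acat"
    and \<alpha> :: "'o \<Rightarrow> ennreal" and \<alpha>' :: "'p \<Rightarrow> ennreal"
    and Fo :: "'o \<Rightarrow> 'p" and Fm :: "'o \<Rightarrow> 'o \<Rightarrow> 'm \<Rightarrow> 'n" and K :: real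
  assumes "abelian_cat C" and "abelian_cat D"
    and "amplitude C \<alpha>" and "amplitude D \<alpha>'"
    and "additive_functor C D Fo Fm"
    and "K \<ge> 0"
    and "\<forall>A\<in>Obj C. \<forall>B\<in>Obj C.
           path_metric D \<alpha>' (Fo A) (Fo B) \<le> ennreal K * path_metric C \<alpha> A B"
  shows "\<forall>A\<in>Obj C. \<alpha>' (Fo A) \<le> ennreal K * \<alpha> A"
proof
  fix A assume A: "A \<in> Obj C"
  obtain Z where Z: "is_zero_obj C Z" using assms(1) unfolding abelian_cat_def by blast
  have Zo: "Z \<in> Obj C" using Z unfolding is_zero_obj_def by simp
  have "\<alpha>' (Fo A) \<le> path_metric D \<alpha>' (Fo A) (Fo Z)"
    using pm_lower[OF assms(2,4) functor_zero[OF assms(1,2,5) Z]] .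
  also have "\<dots> \<le> ennreal K * path_metric C \<alpha> A Z" using assms(7) A Zo by blast
  also have "\<dots> \<le> ennreal K * \<alpha> A" using pm_upper[OF assms(1,3) Z A] by (rule mult_left_mono) simp
  finally show "\<alpha>' (Fo A) \<le> ennreal K * \<alpha> A" .
qed


end
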